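(* Let $L_i,L_j$ be two smooth curves on a smooth surface $S$ meeting transversally at exactly one point $P$. Consider a sequence of blowups $Y\to S$: first blow up $P$; then, at each subsequent step, blow up one of the two points where the most recently created exceptional $(-1)$-curve meets its two neighbouring visible curves (the visible curves being the strict transforms of $L_i,L_j$ and of the exceptional curves). Let $E$ be the last exceptional curve, and let $w_i,w_j$ be the coefficients of $E$ in the total transforms of $L_i$ and $L_j$ on $Y$. Let $\Gamma$ be the dual graph of the visible curves on $Y$; it is a chain from $v_i$ (the vertex of $L_i$) to $v_j$ (the vertex of $L_j$), where an exceptional curve $C$ is marked $-C^2$ and $v_i$, $v_j$ are marked by the number of blowups centered at points of the strict transform of $L_i$, respectively $L_j$. Let $\Gamma_i$ be the subchain on the side of $E$ containing $v_i$ and $\Gamma_j$ the subchain on the side containing $v_j$ (both not containing $E$). Then (1) $\det\Gamma_i=w_i$ and $\det(\Gamma_i-v_i)=w_j$; (2) $\det\Gamma_j=w_j$ and $\det(\Gamma_j-v_j)=w_i$. Moreover, the assignment of $(w_i,w_j)$ to such a sequence of blowups is a bijection between all such sequences and the pairs of coprime positive integers $(w_i,w_j)$ (equivalently, positive rational numbers $w_j/w_i$ in lowest terms).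
   Context: The determinant of a chain (or of any marked graph) is the determinant of the matrix with the marks on the diagonal and $-1$ for each pair of adjacent vertices, $0$ otherwise; the empty chain has determinant $1$. $\Gamma_i-v_i$ is the chain $\Gamma_i$ with the vertex $v_i$ removed. *)

theory Defs
  imports "Jordan_Normal_Form.Determinant"
begin

text \<open>A visible curve is recorded as a triple (mark, ci, cj): its mark in the dual graph
  (for an exceptional curve C this is -C^2; for the strict transforms of L_i, L_j it is
  the number of blowups centred on them), and the coefficients of the curve in the total
  transforms of L_i and L_j (the strict transforms themselves have (1,0) and (0,1)).
  A configuration is the chain of visible curves (listed from v_i to v_j) together with
  the position of the most recently created exceptional curve.\<close>

type_synonym vcurve = "nat \<times> nat \<times> nat"
type_synonym config = "vcurve list \<times> nat"

text \<open>Blow up the intersection point of the adjacent visible curves at positions q, q+1: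
  both get one more blowup on them (mark + 1), a new (-1)-curve is inserted between them,
  whose coefficient in each total transform is the sum of the coefficients of the two
  curves through the blown-up point.\<close>
definition blow_between :: "vcurve list \<Rightarrow> nat \<Rightarrow> config" where
  "blow_between ch q =
     (case ch ! q of (m1, a1, b1) \<Rightarrow>
      case ch ! Suc q of (m2, a2, b2) \<Rightarrow>
        (take q ch @ [(m1 + 1, a1, b1), (1, a1 + a2, b1 + b2), (m2 + 1, a2, b2)]
           @ drop (q + 2) ch, Suc q))"

text \<open>One subsequent step: blow up the point where the last exceptional curve (position p)
  meets its left neighbour (False) or its right neighbour (True).\<close>
definition blow_step :: "config \<Rightarrow> bool \<Rightarrow> config" where
  "blow_step c d = (case c of (ch, p) \<Rightarrow>
      if d then blow_between ch p else blow_between ch (p - 1))"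

definition blowups :: "bool list \<Rightarrow> config" where
  "blowups ds = foldl blow_step (blow_between [(0, 1, 0), (0, 0, 1)] 0) ds"

definition chain_of :: "bool list \<Rightarrow> vcurve list" where
  "chain_of ds = fst (blowups ds)"

definition last_pos :: "bool list \<Rightarrow> nat" where
  "last_pos ds = snd (blowups ds)"

definition w_i :: "bool list \<Rightarrow> nat" where
  "w_i ds = fst (snd (chain_of ds ! last_pos ds))"

definition w_j :: "bool list \<Rightarrow> nat" where
  "w_j ds = snd (snd (chain_of ds ! last_pos ds))"

definition Gamma_i :: "bool list \<Rightarrow> nat list" where
  "Gamma_i ds = map fst (take (last_pos ds) (chain_of ds))"

definition Gamma_j :: "bool list \<Rightarrow> nat list" where
  "Gamma_j ds = map fst (drop (Suc (last_pos ds)) (chain_of ds))"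

definition chain_matrix :: "nat list \<Rightarrow> int mat" where
  "chain_matrix ms = mat (length ms) (length ms)
     (\<lambda>(i, j). if i = j then int (ms ! i) else if i + 1 = j \<or> j + 1 = i then -1 else 0)"

definition chain_det :: "nat list \<Rightarrow> int" where
  "chain_det ms = det (chain_matrix ms)"

end

theory Submission
  imports Defs
begin


fun K :: "nat list \<Rightarrow> int" where
  "K [] = 1"
| "K [m] = int m"
| "K (m # n # ms) = int m * K (n # ms) - K ms"

lemma K_snoc2: "K (xs @ [a, b]) = int b * K (xs @ [a]) - K xs"
proof (induction xs rule: K.induct)
  case (3 m n ms)
  have "K ((m # n # ms) @ [a, b]) = int m * K ((n # ms) @ [a, b]) - K (ms @ [a, b])"
    by simp
  also have "\<dots> = int m * (int b * K ((n # ms) @ [a]) - K (n # ms)) - (int b * K (ms @ [a]) - K ms)"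
    by (simp only: 3)
  also have "\<dots> = int b * K ((m # n # ms) @ [a]) - K (m # n # ms)"
    by (simp add: algebra_simps)
  finally show ?case .
qed (auto simp: algebra_simps)

lemma K_asc:
  assumes rec: "\<And>k. s < k \<Longrightarrow> k < e \<Longrightarrow> x (Suc k) = int (m k) * x k - x (k - 1)"
    and x0: "x s = 1" and x1: "s < e \<Longrightarrow> x (Suc s) = int (m s)"
  shows "s \<le> k \<Longrightarrow> k \<le> e \<Longrightarrow> x k = K (map m [s..<k])"
proof (induction k rule: less_induct)
  case (less k)
  show ?case
  proof (cases "k = s \<or> k = Suc s")
    case True then show ?thesis using x0 x1 less.prems by auto
  next
    case False
    then obtain j where j: "k = Suc (Suc j)" "s \<le> j" using less.prems
      by (metis Suc_le_D le_SucE le_antisym not_less_eq_eq)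
    have l: "[s..<k] = [s..<j] @ [j, Suc j]" using j by simp
    have l1: "[s..<Suc j] = [s..<j] @ [j]" using j by simp
    have "x k = int (m (Suc j)) * x (Suc j) - x j" using rec[of "Suc j"] j less.prems by simp
    also have "\<dots> = K (map m [s..<k])"
      using less.IH[of "Suc j"] less.IH[of j] j less.prems
      by (simp add: l l1 K_snoc2)
    finally show ?thesis .
  qed
qed

lemma K_desc:
  assumes rec: "\<And>k. s < k \<Longrightarrow> k < e \<Longrightarrow> x (k - 1) = int (m k) * x k - x (Suc k)"
    and x0: "x e = 1" and x1: "s < e \<Longrightarrow> x (e - 1) = int (m e)"
  shows "s \<le> k \<Longrightarrow> k \<le> e \<Longrightarrow> x k = K (map m [Suc k..<Suc e])"
proof (induction "e - k" arbitrary: k rule: less_induct)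
  case less
  show ?case
  proof (cases "k = e \<or> Suc k = e")
    case True then show ?thesis using x0 x1 less.prems by auto
  next
    case False
    then have k2: "Suc (Suc k) \<le> e" using less.prems by auto
    have l: "[Suc k..<Suc e] = Suc k # Suc (Suc k) # [Suc (Suc (Suc k))..<Suc e]"
      using k2 by (simp add: upt_rec)
    have l1: "[Suc (Suc k)..<Suc e] = Suc (Suc k) # [Suc (Suc (Suc k))..<Suc e]"
      using k2 by (simp add: upt_rec)
    have "x k = int (m (Suc k)) * x (Suc k) - x (Suc (Suc k))"
      using rec[of "Suc k"] k2 less.prems by simp
    also have "\<dots> = K (map m [Suc k..<Suc e])"
      using less(1)[of "Suc k"] less(1)[of "Suc (Suc k)"] k2 less.prems
      by (simp add: l l1 del: upt_Suc)
    finally show ?thesis .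
  qed
qed




definition good_f :: "nat \<Rightarrow> (nat \<Rightarrow> nat) \<Rightarrow> (nat \<Rightarrow> nat) \<Rightarrow> (nat \<Rightarrow> nat) \<Rightarrow> bool" where
  "good_f n m a b \<longleftrightarrow> 2 \<le> n \<and> a 0 = 1 \<and> b 0 = 0 \<and> a (n-1) = 0 \<and> b (n-1) = 1
     \<and> a 1 = m 0 \<and> b 1 = 1 \<and> a (n-2) = 1 \<and> b (n-2) = m (n-1)
     \<and> (\<forall>k. 0 < k \<and> Suc k < n \<longrightarrow> a (k-1) + a (Suc k) = m k * a k \<and> b (k-1) + b (Suc k) = m k * b k)"

definition ins3 :: "nat \<Rightarrow> (nat \<Rightarrow> 'a) \<Rightarrow> 'a \<Rightarrow> 'a \<Rightarrow> 'a \<Rightarrow> nat \<Rightarrow> 'a" where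
  "ins3 q f x y z k = (if k < q then f k else if k = q then x else if k = Suc q then y
      else if k = Suc (Suc q) then z else f (k - 1))"

lemma good_f_step:
  assumes g: "good_f n m a b" and q: "Suc q < n"
  shows "good_f (Suc n) (ins3 q m (m q + 1) 1 (m (Suc q) + 1))
     (ins3 q a (a q) (a q + a (Suc q)) (a (Suc q)))
     (ins3 q b (b q) (b q + b (Suc q)) (b (Suc q)))"
proof -
  note G = g[unfolded good_f_def]
  have rel: "\<And>k. 0 < k \<Longrightarrow> Suc k < n \<Longrightarrow> a (k-1) + a (Suc k) = m k * a k \<and> b (k-1) + b (Suc k) = m k * b k"
    using G by blast
  define A' where "A' = ins3 q a (a q) (a q + a (Suc q)) (a (Suc q))"
  define B' where "B' = ins3 q b (b q) (b q + b (Suc q)) (b (Suc q))"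
  define M' where "M' = ins3 q m (m q + 1) 1 (m (Suc q) + 1)"
  have R: "A' (k - 1) + A' (Suc k) = M' k * A' k \<and> B' (k - 1) + B' (Suc k) = M' k * B' k"
    if k: "0 < k" "Suc k < Suc n" for k
  proof -
    consider "Suc k < q" | "Suc k = q" | "k = q" | "k = Suc q" | "k = Suc (Suc q)" | "k = Suc (Suc (Suc q))"
      | "Suc (Suc (Suc q)) < k"
    proof -
      have "Suc k < q \<or> Suc k = q \<or> k = q \<or> k = Suc q \<or> k = Suc (Suc q) \<or> k = Suc (Suc (Suc q)) \<or> Suc (Suc (Suc q)) < k"
        by linarith
      then show ?thesis using that by blast
    qed
    then show ?thesis
    proof cases
      case 1 then have "k - 1 < q" by simp
      then show ?thesis using 1 rel[of k] k q by (simp add: ins3_def A'_def B'_def M'_def)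
    next
      case 2 then have "k - 1 < q" by simp
      then show ?thesis using 2 rel[of k] k q by (simp add: ins3_def A'_def B'_def M'_def)
    next
      case 3 then show ?thesis using rel[of k] k q by (simp add: ins3_def A'_def B'_def M'_def algebra_simps)
    next
      case 4 then show ?thesis using k q by (simp add: ins3_def A'_def B'_def M'_def)
    next
      case 5 then show ?thesis using rel[of "Suc q"] k q by (simp add: ins3_def A'_def B'_def M'_def algebra_simps)
    next
      case 6 then show ?thesis using rel[of "Suc (Suc q)"] k q by (simp add: ins3_def A'_def B'_def M'_def algebra_simps)
    next
      case 7
      from less_imp_Suc_add[OF 7] obtain j where "k = Suc (Suc (Suc (Suc q)) + j)" by blast
      then have j: "k = Suc (Suc (Suc (Suc (j + q))))" by simp
      show ?thesis using rel[of "k - 1"] k q unfolding j by (simp add: ins3_def A'_def B'_def M'_def)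
    qed
  qed
  have n2: "2 \<le> n" and a0: "a 0 = 1" and b0: "b 0 = 0" and an: "a (n-1) = 0" and bn: "b (n-1) = 1"
    and a1: "a 1 = m 0" and b1: "b 1 = 1" and an2: "a (n-2) = 1" and bn2: "b (n-2) = m (n-1)"
    using G by auto
  have L: "A' 0 = 1 \<and> B' 0 = 0 \<and> A' 1 = M' 0 \<and> B' 1 = 1"
  proof (cases "q = 0 \<or> q = 1")
    case True then show ?thesis using a0 b0 a1 b1 by (auto simp: ins3_def A'_def B'_def M'_def)
  next
    case False then have "1 < q" by simp
    then show ?thesis using a0 b0 a1 b1 by (simp add: ins3_def A'_def B'_def M'_def)
  qed
  have Rn: "A' n = 0 \<and> B' n = 1 \<and> A' (n - 1) = 1 \<and> B' (n - 1) = M' n"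
  proof -
    consider "n = Suc (Suc q)" | "n = Suc (Suc (Suc q))" | j where "n = Suc (Suc (Suc (Suc (j + q))))"
    proof -
      have "n = Suc (Suc q) \<or> n = Suc (Suc (Suc q)) \<or> Suc (Suc (Suc q)) < n" using q by linarith
      moreover have "\<exists>j. n = Suc (Suc (Suc (Suc (j + q))))" if "Suc (Suc (Suc q)) < n"
        using less_imp_Suc_add[OF that] by auto
      ultimately show ?thesis using that by blast
    qed
    then show ?thesis
    proof cases
      case 1 then show ?thesis using an bn an2 bn2 by (simp add: ins3_def A'_def B'_def M'_def)
    next
      case 2 then show ?thesis using an bn an2 bn2 by (simp add: ins3_def A'_def B'_def M'_def)
    next
      case 3 then show ?thesis using an bn an2 bn2 by (simp add: ins3_def A'_def B'_def M'_def)
    qed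
  qed
  show ?thesis unfolding good_f_def A'_def[symmetric] B'_def[symmetric] M'_def[symmetric]
    using L Rn R n2 by auto
qed




lemma good_f_cong:
  assumes "good_f n m a b" "\<And>k. k < n \<Longrightarrow> m k = m' k \<and> a k = a' k \<and> b k = b' k"
  shows "good_f n m' a' b'"
proof -
  have n: "2 \<le> n" using assms(1) by (simp add: good_f_def)
  have e: "m k = m' k" "a k = a' k" "b k = b' k" if "k < n" for k using assms(2)[OF that] by auto
  have i: "0 < n" "n - 1 < n" "n - 2 < n" "1 < n" using n by auto
  have r: "m' k * a' k = a' (k-1) + a' (Suc k) \<and> m' k * b' k = b' (k-1) + b' (Suc k)"
    if "0 < k" "Suc k < n" for k
  proof -
    have "k - 1 < n" "k < n" using that by auto
    then show ?thesis using assms(1) that unfolding good_f_def e[symmetric] by (metis e)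
  qed
  show ?thesis using assms(1) r unfolding good_f_def e(1-3)[OF i(2)] e(1-3)[OF i(3)] e(1-3)[OF i(1)] e(1-3)[OF i(4)]
    by (simp add: e i)
qed

definition good :: "vcurve list \<Rightarrow> bool" where
  "good ch = good_f (length ch) (\<lambda>k. fst (ch ! k)) (\<lambda>k. fst (snd (ch ! k))) (\<lambda>k. snd (snd (ch ! k)))"

lemma bb_simps:
  assumes "Suc q < length ch"
  shows "length (fst (blow_between ch q)) = Suc (length ch)"
    "snd (blow_between ch q) = Suc q"
    "k < Suc (length ch) \<Longrightarrow> fst (blow_between ch q) ! k =
       ins3 q (\<lambda>i. ch ! i) (fst (ch ! q) + 1, snd (ch ! q))
          (1, fst (snd (ch ! q)) + fst (snd (ch ! Suc q)), snd (snd (ch ! q)) + snd (snd (ch ! Suc q)))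
          (fst (ch ! Suc q) + 1, snd (ch ! Suc q)) k"
proof -
  obtain m1 a1 b1 where 1: "ch ! q = (m1, a1, b1)" by (metis prod_cases3)
  obtain m2 a2 b2 where 2: "ch ! Suc q = (m2, a2, b2)" by (metis prod_cases3)
  have bb: "blow_between ch q = (take q ch @ [(m1 + 1, a1, b1), (1, a1 + a2, b1 + b2), (m2 + 1, a2, b2)]
           @ drop (q + 2) ch, Suc q)"
    unfolding blow_between_def 1 2 by simp
  show "length (fst (blow_between ch q)) = Suc (length ch)" "snd (blow_between ch q) = Suc q"
    using assms by (auto simp: bb)
  assume k: "k < Suc (length ch)"
  have lt: "length (take q ch) = q" using assms by simp
  consider "k < q" | "k = q" | "k = Suc q" | "k = Suc (Suc q)" | "Suc (Suc q) < k" by linarith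
  then show "fst (blow_between ch q) ! k =
       ins3 q (\<lambda>i. ch ! i) (fst (ch ! q) + 1, snd (ch ! q))
          (1, fst (snd (ch ! q)) + fst (snd (ch ! Suc q)), snd (snd (ch ! q)) + snd (snd (ch ! Suc q)))
          (fst (ch ! Suc q) + 1, snd (ch ! Suc q)) k"
  proof cases
    case 1 then show ?thesis using assms by (simp add: bb ins3_def nth_append)
  next
    case 2 then show ?thesis using assms by (simp add: bb ins3_def nth_append 1 2)
  next
    case 3 then show ?thesis using assms by (simp add: bb ins3_def nth_append 1 2)
  next
    case 4 then show ?thesis using assms by (simp add: bb ins3_def nth_append 1 2)
  next
    case 5
    from less_imp_Suc_add[OF 5] obtain j where "k = Suc (Suc (Suc q) + j)" by blast
    then have j: "k = Suc (Suc (Suc (q + j)))" by simp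
    have "fst (blow_between ch q) ! k = drop (q + 2) ch ! j"
      using assms unfolding bb j by (simp add: nth_append)
    also have "\<dots> = ch ! (k - 1)" using assms k j by simp
    finally show ?thesis using j by (simp add: ins3_def)
  qed
qed

lemma ins3_fst: "f (ins3 q g x y z k) = ins3 q (\<lambda>i. f (g i)) (f x) (f y) (f z) k"
  by (simp add: ins3_def)

lemma good_bb:
  assumes "good ch" "Suc q < length ch"
  shows "good (fst (blow_between ch q))"
proof -
  have g: "good_f (length ch) (\<lambda>k. fst (ch ! k)) (\<lambda>k. fst (snd (ch ! k))) (\<lambda>k. snd (snd (ch ! k)))"
    using assms(1) by (simp add: good_def)
  note s = good_f_step[OF g assms(2)]
  show ?thesis unfolding good_def bb_simps(1)[OF assms(2)]
  proof (rule good_f_cong[OF s])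
    fix k assume k: "k < Suc (length ch)"
    show "ins3 q (\<lambda>k. fst (ch ! k)) (fst (ch ! q) + 1) 1 (fst (ch ! Suc q) + 1) k = fst (fst (blow_between ch q) ! k) \<and>
         ins3 q (\<lambda>k. fst (snd (ch ! k))) (fst (snd (ch ! q))) (fst (snd (ch ! q)) + fst (snd (ch ! Suc q))) (fst (snd (ch ! Suc q))) k =
         fst (snd (fst (blow_between ch q) ! k)) \<and>
         ins3 q (\<lambda>k. snd (snd (ch ! k))) (snd (snd (ch ! q))) (snd (snd (ch ! q)) + snd (snd (ch ! Suc q))) (snd (snd (ch ! Suc q))) k =
         snd (snd (fst (blow_between ch q) ! k))"
      unfolding bb_simps(3)[OF assms(2) k] by (simp add: ins3_def)
  qed
qed




definition padd :: "nat \<times> nat \<Rightarrow> nat \<times> nat \<Rightarrow> nat \<times> nat" where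
  "padd x y = (fst x + fst y, snd x + snd y)"

definition sb :: "(nat \<times> nat) \<times> (nat \<times> nat) \<Rightarrow> bool \<Rightarrow> (nat \<times> nat) \<times> (nat \<times> nat)" where
  "sb LR d = (if d then (padd (fst LR) (snd LR), snd LR) else (fst LR, padd (fst LR) (snd LR)))"

definition cinv :: "bool list \<Rightarrow> bool" where
  "cinv ds = (case blowups ds of (ch, p) \<Rightarrow> good ch \<and> 0 < p \<and> Suc p < length ch \<and> fst (ch ! p) = 1
     \<and> snd (ch ! (p - 1)) = fst (foldl sb ((1,0),(0,1)) ds)
     \<and> snd (ch ! Suc p) = snd (foldl sb ((1,0),(0,1)) ds))"

lemma blowups_snoc: "blowups (ds @ [d]) = blow_step (blowups ds) d"
  by (simp add: blowups_def)

lemma cinv_all: "cinv ds"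
proof (induction ds rule: rev_induct)
  case Nil
  have b: "blowups [] = ([(1,1,0),(1,1,1),(1,0,1)], 1)"
    by (simp add: blowups_def blow_between_def)
  have g0: "good [(0,1,0),(0,0,1)]" by (auto simp: good_def good_f_def)
  have "good (fst (blow_between [(0,1,0),(0,0,1)] 0))" by (rule good_bb[OF g0]) simp
  then have "good [(1,1,0),(1,1,1),(1,0,1)]" by (simp add: blow_between_def)
  then show ?case unfolding cinv_def b by simp
next
  case (snoc d ds)
  obtain ch p where cp: "blowups ds = (ch, p)" by fastforce
  obtain L R where LR: "foldl sb ((1,0),(0,1)) ds = (L, R)" by (metis prod.exhaust)
  have I: "good ch" "0 < p" "Suc p < length ch" "fst (ch ! p) = 1" "snd (ch ! (p - 1)) = L"
    "snd (ch ! Suc p) = R"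
    using snoc.IH unfolding cinv_def cp LR by auto
  have rel: "fst (snd (ch ! (p-1))) + fst (snd (ch ! Suc p)) = fst (snd (ch ! p))
     \<and> snd (snd (ch ! (p-1))) + snd (snd (ch ! Suc p)) = snd (snd (ch ! p))"
    using I(1-4) unfolding good_def good_f_def by (metis mult_1)
  have E: "snd (ch ! p) = padd L R"
    using rel I(5,6) by (simp add: padd_def prod_eq_iff)
  have fl: "foldl sb ((1,0),(0,1)) (ds @ [d]) = sb (L, R) d" using LR by simp
  show ?case
  proof (cases d)
    case True
    have st: "blowups (ds @ [d]) = blow_between ch p" using True by (simp add: blowups_snoc cp blow_step_def)
    have q: "Suc p < length ch" by (rule I(3))
    show ?thesis unfolding cinv_def st fl
      using good_bb[OF I(1) q] bb_simps[OF q] I E True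
      by (auto simp: sb_def ins3_def split: prod.splits)
  next
    case False
    have st: "blowups (ds @ [d]) = blow_between ch (p - 1)" using False by (simp add: blowups_snoc cp blow_step_def)
    have q: "Suc (p - 1) < length ch" using I by simp
    have pp: "Suc (p - 1) = p" using I by simp
    show ?thesis unfolding cinv_def st fl
      using good_bb[OF I(1) q] bb_simps[OF q] I E False pp
      by (auto simp: sb_def ins3_def split: prod.splits)
  qed
qed




fun wf :: "bool list \<Rightarrow> nat \<times> nat" where
  "wf [] = (1, 1)"
| "wf (d # ds) = (if d then (fst (wf ds), fst (wf ds) + snd (wf ds))
                   else (fst (wf ds) + snd (wf ds), snd (wf ds)))"

lemma sb_simps: "sb (l, r) True = (padd l r, r)" "sb (l, r) False = (l, padd l r)"
  by (simp_all add: sb_def)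

lemma fold_lin: "foldl sb (l, r) ds = (L, R) \<Longrightarrow>
   padd L R = (fst (wf ds) * fst l + snd (wf ds) * fst r, fst (wf ds) * snd l + snd (wf ds) * snd r)"
proof (induction ds arbitrary: l r)
  case Nil then show ?case by (auto simp: padd_def)
next
  case (Cons d ds)
  show ?case
  proof (cases d)
    case True
    with Cons.prems have "foldl sb (padd l r, r) ds = (L, R)" by (simp add: sb_simps)
    from Cons.IH[OF this] True show ?thesis by (simp add: padd_def algebra_simps)
  next
    case False
    with Cons.prems have "foldl sb (l, padd l r) ds = (L, R)" by (simp add: sb_simps)
    from Cons.IH[OF this] False show ?thesis by (simp add: padd_def algebra_simps)
  qed
qed

lemma wf_pos: "0 < fst (wf ds) \<and> 0 < snd (wf ds)"
  by (induction ds) auto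

lemma wf_pos1[simp]: "0 < fst (wf ds)" and wf_pos2[simp]: "0 < snd (wf ds)"
  using wf_pos by auto

lemma wf_nz[simp]: "fst (wf ds) \<noteq> 0" "snd (wf ds) \<noteq> 0" "0 \<noteq> fst (wf ds)" "0 \<noteq> snd (wf ds)"
  using wf_pos[of ds] by auto

lemma wf_coprime: "coprime (fst (wf ds)) (snd (wf ds))"
proof (induction ds)
  case Nil then show ?case by simp
next
  case (Cons d ds) then show ?case
    by (auto simp: coprime_iff_gcd_eq_1 gcd_add1 gcd_add2)
qed

lemma wf_inj: "wf ds = wf es \<Longrightarrow> ds = es"
proof (induction ds arbitrary: es)
  case Nil then show ?case
    by (cases es) (auto split: if_splits)
next
  case (Cons d ds)
  then show ?case
    by (cases es) (auto split: if_splits simp: prod_eq_iff)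
qed

lemma c1: "(a::nat) < b \<Longrightarrow> coprime a b \<Longrightarrow> coprime a (b - a)"
proof -
  assume h: "a < b" "coprime a b"
  have "gcd (b - a) a = gcd b a" using h by (simp add: gcd_diff1_nat)
  then show ?thesis using h by (simp add: coprime_iff_gcd_eq_1 gcd.commute)
qed

lemma c2: "(b::nat) < a \<Longrightarrow> coprime a b \<Longrightarrow> coprime (a - b) b"
  using gcd_diff1_nat[of b a] by (simp add: coprime_iff_gcd_eq_1)

lemma wf_surj: "0 < a \<Longrightarrow> 0 < b \<Longrightarrow> coprime a b \<Longrightarrow> \<exists>ds. wf ds = (a, b)"
proof (induction "a + b" arbitrary: a b rule: less_induct)
  case less
  consider "a = b" | "a < b" | "b < a" by linarith
  then show ?case
  proof cases
    case 1 then have "a = 1" "b = 1" using less.prems by auto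
    then show ?thesis using wf.simps(1) by blast
  next
    case 2
    have "coprime a (b - a)" using less.prems 2 c1 by blast
    have "\<exists>ds. wf ds = (a, b - a)"
      by (rule less.hyps) (use 2 less.prems \<open>coprime a (b - a)\<close> in auto)
    then obtain ds where "wf ds = (a, b - a)" by blast
    then have "wf (True # ds) = (a, b)" using 2 by simp
    then show ?thesis by blast
  next
    case 3
    have "coprime (a - b) b" using less.prems 3 c2 by blast
    have "\<exists>ds. wf ds = (a - b, b)"
      by (rule less.hyps) (use 3 less.prems \<open>coprime (a - b) b\<close> in auto)
    then obtain ds where "wf ds = (a - b, b)" by blast
    then have "wf (False # ds) = (a, b)" using 3 by simp
    then show ?thesis by blast
  qed
qed




lemma cm_carrier: "chain_matrix ms \<in> carrier_mat (length ms) (length ms)"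
  unfolding chain_matrix_def by auto

lemma chain_det_Nil: "chain_det [] = 1"
  unfolding chain_det_def by (rule det_dim_zero) (simp add: chain_matrix_def)

lemma chain_det_single: "chain_det [m] = int m"
proof -
  have "chain_matrix [m] \<in> carrier_mat 1 1" using cm_carrier[of "[m]"] by simp
  then have "det (chain_matrix [m]) = chain_matrix [m] $$ (0,0)"
    by (subst laplace_expansion_row[of _ 1 0]) (auto simp: cofactor_def mat_delete_def)
  then show ?thesis unfolding chain_det_def by (simp add: chain_matrix_def)
qed

lemma chain_det_Cons2: "chain_det (m # n # ms) = int m * chain_det (n # ms) - chain_det ms"
proof -
  define A where "A = chain_matrix (m # n # ms)"
  define N where "N = length ms + 2"
  have A: "A \<in> carrier_mat N N" unfolding A_def N_def using cm_carrier[of "m#n#ms"] by simp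
  have "det A = (\<Sum>j<N. A $$ (0,j) * cofactor A 0 j)"
    by (rule laplace_expansion_row[OF A]) (simp add: N_def)
  also have "\<dots> = (\<Sum>j\<in>{0,1}. A $$ (0,j) * cofactor A 0 j)"
  proof (rule sum.mono_neutral_right)
    show "\<forall>j\<in>{..<N} - {0, 1}. A $$ (0, j) * cofactor A 0 j = 0"
      by (auto simp: A_def chain_matrix_def N_def)
  qed (auto simp: N_def)
  also have "\<dots> = int m * det (mat_delete A 0 0) + det (mat_delete A 0 1)"
    by (simp add: A_def chain_matrix_def N_def cofactor_def)
  also have "mat_delete A 0 0 = chain_matrix (n # ms)"
    by (rule eq_matI) (auto simp: A_def chain_matrix_def mat_delete_def)
  also have "det (mat_delete A 0 1) = - chain_det ms"
  proof -
    define B where "B = mat_delete A 0 1"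
    have B: "B \<in> carrier_mat (Suc (length ms)) (Suc (length ms))"
      unfolding B_def A_def by (simp add: chain_matrix_def mat_delete_def)
    have "det B = (\<Sum>i<Suc (length ms). B $$ (i,0) * cofactor B i 0)"
      by (rule laplace_expansion_column[OF B]) simp
    also have "\<dots> = (\<Sum>i\<in>{0}. B $$ (i,0) * cofactor B i 0)"
    proof (rule sum.mono_neutral_right)
      show "\<forall>i\<in>{..<Suc (length ms)} - {0}. B $$ (i, 0) * cofactor B i 0 = 0"
        by (auto simp: B_def A_def chain_matrix_def mat_delete_def)
    qed auto
    also have "\<dots> = - det (mat_delete B 0 0)"
      by (simp add: B_def A_def chain_matrix_def mat_delete_def cofactor_def)
    also have "mat_delete B 0 0 = chain_matrix ms"
      by (rule eq_matI) (auto simp: B_def A_def chain_matrix_def mat_delete_def)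
    finally show ?thesis unfolding B_def chain_det_def .
  qed
  finally show ?thesis unfolding A_def chain_det_def by simp
qed

lemma chain_det_K: "chain_det ms = K ms"
  by (induction ms rule: K.induct) (auto simp: chain_det_Nil chain_det_single chain_det_Cons2)


lemma take_map_nth: "p \<le> length xs \<Longrightarrow> take p xs = map (\<lambda>k. xs ! k) [0..<p]"
  by (rule nth_equalityI) auto

lemma drop_map_nth: "drop p xs = map (\<lambda>k. xs ! k) [p..<length xs]"
  by (rule nth_equalityI) auto

lemma main_det:
  fixes ds
  defines "ch \<equiv> chain_of ds" and "p \<equiv> last_pos ds"
  defines "n \<equiv> length ch"
  defines "m \<equiv> \<lambda>k. fst (ch ! k)" and "a \<equiv> \<lambda>k. fst (snd (ch ! k))" and "b \<equiv> \<lambda>k. snd (snd (ch ! k))"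
  shows "chain_det (Gamma_i ds) = int (w_i ds)
             \<and> chain_det (tl (Gamma_i ds)) = int (w_j ds)
             \<and> chain_det (Gamma_j ds) = int (w_j ds)
             \<and> chain_det (butlast (Gamma_j ds)) = int (w_i ds)"
proof -
  have bl: "blowups ds = (ch, p)" unfolding ch_def p_def chain_of_def last_pos_def by simp
  have I: "good ch" "0 < p" "Suc p < n"
    using cinv_all[of ds] unfolding cinv_def bl n_def by auto
  have g: "good_f n m a b" using I(1) unfolding good_def n_def m_def a_def b_def .
  note G = g[unfolded good_f_def]
  have rel: "\<And>k. 0 < k \<Longrightarrow> Suc k < n \<Longrightarrow> a (k-1) + a (Suc k) = m k * a k \<and> b (k-1) + b (Suc k) = m k * b k"
    using G by blast
  have wi: "w_i ds = a p" and wj: "w_j ds = b p"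
    unfolding w_i_def w_j_def a_def b_def ch_def p_def by simp_all
  have Gi: "Gamma_i ds = map m [0..<p]"
    unfolding Gamma_i_def ch_def[symmetric] p_def[symmetric] m_def using I(3) n_def
    by (simp add: take_map_nth)
  have Gj: "Gamma_j ds = map m [Suc p..<n]"
    unfolding Gamma_j_def ch_def[symmetric] p_def[symmetric] m_def n_def
    by (simp add: drop_map_nth)
  have tGi: "tl (Gamma_i ds) = map m [1..<p]"
    unfolding Gi by (simp add: map_tl[symmetric] tl_upt)
  have bGj: "butlast (Gamma_j ds) = map m [Suc p..<n - 1]"
  proof -
    have "[Suc p..<n] = [Suc p..<n - 1] @ [n - 1]"
      using upt_Suc[of "Suc p" "n - 1"] I(3) by (simp add: Suc_diff_1[symmetric])
    then show ?thesis unfolding Gj by simp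
  qed
  have d1: "int (a p) = K (map m [0..<p])"
  proof (rule K_asc[where e = "n - 1"])
    show "int (a (Suc k)) = int (m k) * int (a k) - int (a (k - 1))" if "0 < k" "k < n - 1" for k
      using rel[of k] that by (simp add: algebra_simps flip: of_nat_add of_nat_mult)
  qed (use G I in auto)
  have d2: "int (b p) = K (map m [1..<p])"
  proof (rule K_asc[where e = "n - 1"])
    show "int (b (Suc k)) = int (m k) * int (b k) - int (b (k - 1))" if "1 < k" "k < n - 1" for k
      using rel[of k] that by (simp add: algebra_simps flip: of_nat_add of_nat_mult)
    show "int (b (Suc 1)) = int (m 1)" if "1 < n - 1"
      using rel[of 1] that G by simp
  qed (use G I in auto)
  have d3: "int (b p) = K (map m [Suc p..<Suc (n - 1)])"
  proof (rule K_desc[where s = 0])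
    show "int (b (k - 1)) = int (m k) * int (b k) - int (b (Suc k))" if "0 < k" "k < n - 1" for k
      using rel[of k] that by (simp add: algebra_simps flip: of_nat_add of_nat_mult)
  qed (use G I in \<open>auto simp: numeral_2_eq_2\<close>)
  have d4: "int (a p) = K (map m [Suc p..<Suc (n - 2)])"
  proof (rule K_desc[where s = 0])
    show "int (a (k - 1)) = int (m k) * int (a k) - int (a (Suc k))" if "0 < k" "k < n - 2" for k
      using rel[of k] that by (simp add: algebra_simps flip: of_nat_add of_nat_mult)
    show "int (a (n - 2 - 1)) = int (m (n - 2))" if "0 < n - 2"
    proof -
      have "Suc (n - 2) = n - 1" using that by simp
      then show ?thesis using rel[of "n - 2"] that G by simp
    qed
  qed (use G I in auto)
  have e1: "Suc (n - 1) = n" and e2: "Suc (n - 2) = n - 1" using I by auto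
  show ?thesis
    unfolding chain_det_K wi wj tGi bGj unfolding Gi Gj using d1 d2 d3 d4 e1 e2 by simp
qed


lemma E_coeff: "snd (chain_of ds ! last_pos ds) = padd (fst (foldl sb ((1,0),(0,1)) ds)) (snd (foldl sb ((1,0),(0,1)) ds))"
proof -
  obtain ch p where cp: "blowups ds = (ch, p)" by fastforce
  obtain L R where LR: "foldl sb ((1,0),(0,1)) ds = (L, R)" by (metis prod.exhaust)
  have I: "good ch" "0 < p" "Suc p < length ch" "fst (ch ! p) = 1" "snd (ch ! (p - 1)) = L"
    "snd (ch ! Suc p) = R"
    using cinv_all[of ds] unfolding cinv_def cp LR by auto
  have rel: "fst (snd (ch ! (p-1))) + fst (snd (ch ! Suc p)) = fst (snd (ch ! p))
     \<and> snd (snd (ch ! (p-1))) + snd (snd (ch ! Suc p)) = snd (snd (ch ! p))"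
    using I(1-4) unfolding good_def good_f_def by (metis mult_1)
  have E: "snd (ch ! p) = padd L R"
    using rel I(5,6) by (simp add: padd_def prod_eq_iff)
  then show ?thesis using cp LR by (simp add: chain_of_def last_pos_def)
qed

lemma w_wf: "(w_i ds, w_j ds) = wf ds"
proof -
  obtain L R where LR: "foldl sb ((1,0),(0,1)) ds = (L, R)" by (metis prod.exhaust)
  have "padd L R = wf ds" using fold_lin[OF LR] by simp
  then show ?thesis using E_coeff[of ds] LR unfolding w_i_def w_j_def by simp
qed

theorem theorem3p5:
  shows "(\<forall>ds. chain_det (Gamma_i ds) = int (w_i ds)
             \<and> chain_det (tl (Gamma_i ds)) = int (w_j ds)
             \<and> chain_det (Gamma_j ds) = int (w_j ds)
             \<and> chain_det (butlast (Gamma_j ds)) = int (w_i ds))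
       \<and> bij_betw (\<lambda>ds. (w_i ds, w_j ds)) UNIV
           {(a, b). 0 < a \<and> 0 < b \<and> coprime a (b::nat)}"
proof
  show "\<forall>ds. chain_det (Gamma_i ds) = int (w_i ds)
             \<and> chain_det (tl (Gamma_i ds)) = int (w_j ds)
             \<and> chain_det (Gamma_j ds) = int (w_j ds)
             \<and> chain_det (butlast (Gamma_j ds)) = int (w_i ds)"
    using main_det by blast
  have f: "(\<lambda>ds. (w_i ds, w_j ds)) = wf" using w_wf by (simp add: fun_eq_iff)
  show "bij_betw (\<lambda>ds. (w_i ds, w_j ds)) UNIV {(a, b). 0 < a \<and> 0 < b \<and> coprime a (b::nat)}"
    unfolding f bij_betw_def
  proof
    show "inj wf" by (rule injI) (rule wf_inj)
    show "range wf = {(a, b). 0 < a \<and> 0 < b \<and> coprime a b}"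
    proof (rule equalityI)
      show "range wf \<subseteq> {(a, b). 0 < a \<and> 0 < b \<and> coprime a b}"
      proof
        fix x assume "x \<in> range wf"
        then obtain ds where "x = wf ds" by blast
        then show "x \<in> {(a, b). 0 < a \<and> 0 < b \<and> coprime a b}"
          using wf_coprime[of ds] wf_pos[of ds] by (simp add: case_prod_beta)
      qed
    next
      show "{(a, b). 0 < a \<and> 0 < b \<and> coprime a b} \<subseteq> range wf"
      proof
      fix x :: "nat \<times> nat" assume "x \<in> {(a, b). 0 < a \<and> 0 < b \<and> coprime a b}"
      then obtain a b :: nat where x: "x = (a, b)" "0 < a" "0 < b" "coprime a b" by auto
      then obtain ds where "wf ds = (a, b)" using wf_surj by blast
      then show "x \<in> range wf" using x by (metis rangeI)
      qed
    qed
  qed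
qed

end
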